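(* Let $G$ be a game over a graph $\Gamma=(V,E)$, let $(U,W)$ be a cut of $\Gamma$, and let $A\subseteq U$, $B\subseteq V$, $C\subseteq W$. If $G\vDash A\cup B\rhd C$, then $G\vDash {\cal B}(U)\cup{\cal B}(W)\cup B\rhd C$.
   Context: Graphs are finite, undirected, with no loops or multiple edges; $Adj^+(v)$ is $v$ together with its neighbours. A cut $(U,W)$ is a partition $V=U\sqcup W$. The border of $U\subseteq V$ is ${\cal B}(U)=\{v\in U\mid (v,w)\in E\text{ for some }w\in V\setminus U\}$. A game over $\Gamma$ is a strategic game with player set $V$, finite strategy sets $S_v$, and pay-off functions $u_v$ depending only on the strategies of players in $Adj^+(v)$. $NE(G)$ is its set of pure Nash equilibria. For profiles $\mathbf s,\mathbf t$ and $X\subseteq V$, $\mathbf s=_X\mathbf t$ means they agree on every player of $X$. $G\vDash A\rhd B$ means: for all $\mathbf s,\mathbf t\in NE(G)$, $\mathbf s=_A\mathbf t$ implies $\mathbf s=_B\mathbf t$. *)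

theory Defs
  imports Complex_Main "HOL-Library.FuncSet"
begin

definition simple_graph :: "'v set \<Rightarrow> ('v \<times> 'v) set \<Rightarrow> bool" where
  "simple_graph V E \<longleftrightarrow> finite V \<and> E \<subseteq> V \<times> V \<and> sym E \<and> (\<forall>v. (v, v) \<notin> E)"

definition adj_plus :: "('v \<times> 'v) set \<Rightarrow> 'v \<Rightarrow> 'v set" where
  "adj_plus E v = insert v {w. (v, w) \<in> E}"

definition profiles :: "'v set \<Rightarrow> ('v \<Rightarrow> 's set) \<Rightarrow> ('v \<Rightarrow> 's) set" where
  "profiles V S = Pi\<^sub>E V S"

definition agree_on :: "'v set \<Rightarrow> ('v \<Rightarrow> 's) \<Rightarrow> ('v \<Rightarrow> 's) \<Rightarrow> bool" where
  "agree_on X s t \<longleftrightarrow> (\<forall>x\<in>X. s x = t x)"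

definition game_over ::
  "'v set \<Rightarrow> ('v \<times> 'v) set \<Rightarrow> ('v \<Rightarrow> 's set) \<Rightarrow> ('v \<Rightarrow> ('v \<Rightarrow> 's) \<Rightarrow> real) \<Rightarrow> bool" where
  "game_over V E S u \<longleftrightarrow> simple_graph V E \<and> (\<forall>v\<in>V. finite (S v)) \<and>
     (\<forall>v\<in>V. \<forall>s\<in>profiles V S. \<forall>t\<in>profiles V S.
        agree_on (adj_plus E v) s t \<longrightarrow> u v s = u v t)"

definition NE :: "'v set \<Rightarrow> ('v \<Rightarrow> 's set) \<Rightarrow> ('v \<Rightarrow> ('v \<Rightarrow> 's) \<Rightarrow> real) \<Rightarrow> ('v \<Rightarrow> 's) set" where
  "NE V S u = {s \<in> profiles V S. \<forall>v\<in>V. \<forall>x\<in>S v. u v (s(v := x)) \<le> u v s}"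

definition entails :: "'v set \<Rightarrow> ('v \<Rightarrow> 's set) \<Rightarrow> ('v \<Rightarrow> ('v \<Rightarrow> 's) \<Rightarrow> real) \<Rightarrow> 'v set \<Rightarrow> 'v set \<Rightarrow> bool" where
  "entails V S u A B \<longleftrightarrow> (\<forall>s\<in>NE V S u. \<forall>t\<in>NE V S u. agree_on A s t \<longrightarrow> agree_on B s t)"

definition is_cut :: "'v set \<Rightarrow> 'v set \<Rightarrow> 'v set \<Rightarrow> bool" where
  "is_cut V U W \<longleftrightarrow> U \<union> W = V \<and> U \<inter> W = {}"

definition border :: "'v set \<Rightarrow> ('v \<times> 'v) set \<Rightarrow> 'v set \<Rightarrow> 'v set" where
  "border V E U = {v \<in> U. \<exists>w \<in> V - U. (v, w) \<in> E}"

end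

theory Submission
  imports Defs
begin

theorem lemma4:
  fixes V U W A B C :: "'v set" and E :: "('v \<times> 'v) set"
    and S :: "'v \<Rightarrow> 's set" and u :: "'v \<Rightarrow> ('v \<Rightarrow> 's) \<Rightarrow> real"
  assumes "game_over V E S u"
    and "is_cut V U W"
    and "A \<subseteq> U" and "B \<subseteq> V" and "C \<subseteq> W"
    and "entails V S u (A \<union> B) C"
  shows "entails V S u (border V E U \<union> border V E W \<union> B) C"
  unfolding entails_def
proof (intro ballI impI)
  fix s t assume sN: "s \<in> NE V S u" and tN: "t \<in> NE V S u"
    and ag: "agree_on (border V E U \<union> border V E W \<union> B) s t"
  have sg: "simple_graph V E" and dep: "\<forall>v\<in>V. \<forall>s\<in>profiles V S. \<forall>t\<in>profiles V S.
        agree_on (adj_plus E v) s t \<longrightarrow> u v s = u v t"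
    using assms(1) unfolding game_over_def by auto
  have EV: "E \<subseteq> V \<times> V" and sy: "sym E" using sg unfolding simple_graph_def by auto
  have cut: "U \<union> W = V" "U \<inter> W = {}" using assms(2) unfolding is_cut_def by auto
  have sP: "s \<in> profiles V S" and tP: "t \<in> profiles V S" using sN tN unfolding NE_def by auto
  define r where "r = (\<lambda>x. if x \<in> U then s x else t x)"
  have rP: "r \<in> profiles V S"
    using sP tP cut unfolding profiles_def r_def PiE_def Pi_def extensional_def by auto
  have agS: "agree_on (adj_plus E v) (r(v:=y)) (s(v:=y))" if "v \<in> U" for v y
    unfolding agree_on_def adj_plus_def
  proof
    fix w assume w: "w \<in> insert v {w. (v, w) \<in> E}"
    show "(r(v:=y)) w = (s(v:=y)) w"
    proof (cases "w = v")
      case False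
      then have e: "(v,w) \<in> E" using w by auto
      show ?thesis
      proof (cases "w \<in> U")
        case True then show ?thesis using False by (simp add: r_def)
      next
        case nU: False
        have "w \<in> W" using e EV cut nU by auto
        moreover have "(w,v) \<in> E" using e sy by (meson symE)
        ultimately have "w \<in> border V E W" using that cut EV unfolding border_def by blast
        then have "s w = t w" using ag unfolding agree_on_def by auto
        then show ?thesis using False nU by (simp add: r_def)
      qed
    qed simp
  qed
  have agT: "agree_on (adj_plus E v) (r(v:=y)) (t(v:=y))" if "v \<in> W" for v y
    unfolding agree_on_def adj_plus_def
  proof
    fix w assume w: "w \<in> insert v {w. (v, w) \<in> E}"
    show "(r(v:=y)) w = (t(v:=y)) w"
    proof (cases "w = v")
      case False
      then have e: "(v,w) \<in> E" using w by auto
      show ?thesis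
      proof (cases "w \<in> U")
        case nU: False then show ?thesis using False by (simp add: r_def)
      next
        case True
        have "(w,v) \<in> E" using e sy by (meson symE)
        then have "w \<in> border V E U" using that True cut EV unfolding border_def by blast
        then have "s w = t w" using ag unfolding agree_on_def by auto
        then show ?thesis using False True by (simp add: r_def)
      qed
    qed simp
  qed
  have upd: "f(v:=y) \<in> profiles V S" if "f \<in> profiles V S" "v \<in> V" "y \<in> S v" for f v y
    using that unfolding profiles_def by (auto simp: PiE_def Pi_def extensional_def)
  have rN: "r \<in> NE V S u"
    unfolding NE_def
  proof (intro CollectI conjI ballI rP)
    fix v y assume v: "v \<in> V" and y: "y \<in> S v"
    show "u v (r(v := y)) \<le> u v r"
    proof (cases "v \<in> U")
      case True
      have 1: "u v (r(v:=y)) = u v (s(v:=y))"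
        using dep v upd[OF rP v y] upd[OF sP v y] agS[OF True] by blast
      have "r v = s v" using True by (simp add: r_def)
      then have 2: "u v r = u v s"
        using dep v rP sP agS[OF True, of "r v"] by (metis fun_upd_triv)
      have "u v (s(v:=y)) \<le> u v s" using sN v y unfolding NE_def by auto
      then show ?thesis using 1 2 by simp
    next
      case False
      then have vW: "v \<in> W" using v cut by auto
      have 1: "u v (r(v:=y)) = u v (t(v:=y))"
        using dep v upd[OF rP v y] upd[OF tP v y] agT[OF vW] by blast
      have "r v = t v" using False by (simp add: r_def)
      then have 2: "u v r = u v t"
        using dep v rP tP agT[OF vW, of "r v"] by (metis fun_upd_triv)
      have "u v (t(v:=y)) \<le> u v t" using tN v y unfolding NE_def by auto
      then show ?thesis using 1 2 by simp
    qed
  qed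
  have "agree_on (A \<union> B) r s"
    using ag assms(3) unfolding agree_on_def r_def by auto
  then have "agree_on C r s" using assms(6) rN sN unfolding entails_def by blast
  then show "agree_on C s t" using assms(5) cut unfolding agree_on_def r_def by (metis disjoint_iff subsetD)
qed

end
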